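(* There is an absolute constant $c>0$ such that the following holds. Let $n\ge 1$, $x\in\mathbb{R}^n$, let $R\ge 1$ and $k\ge 2$ be integers, and let $\widehat{x}$ be the Count-Sketch estimate of $x$ using $R$ rows and $k$ columns with fully random hash functions. Then for every real $t\le R$ and every index $i\in[n]$, \[ \Pr\left[(\widehat{x}_i - x_i)^2 > \frac{t}{R}\cdot \frac{\|x_{\overline{[k]}}\|_2^2}{k}\right] < 2e^{-ct}. \]
   Context: Count-Sketch with $R$ rows and $C$ columns: for each row $u\in[R]$ choose hash functions $h_u:[n]\to[C]$ and $s_u:[n]\to\{\pm1\}$; "fully random" means all values $h_u(i)$ (uniform on $[C]$) and $s_u(i)$ (uniform on $\{\pm1\}$), over all $u$ and $i$, are mutually independent. The sketch is $y_{u,v}=\sum_{i:h_u(i)=v}s_u(i)x_i$ for $u\in[R]$, $v\in[C]$, and the estimate is $\widehat{x}_i=\operatorname{median}_{u\in[R]} s_u(i)\,y_{u,h_u(i)}$ (for even $R$ the median is the average of the two middle values). For $x\in\mathbb{R}^n$, $x_{\overline{[k]}}$ denotes the vector obtained from $x$ by replacing its $k$ largest-magnitude coordinates with $0$. *)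

theory Defs
  imports "HOL-Probability.Probability"
begin

definition median_list :: "real list \<Rightarrow> real" where
  "median_list xs = (let ys = sort xs; m = length xs in
     if odd m then ys ! (m div 2) else (ys ! (m div 2 - 1) + ys ! (m div 2)) / 2)"

text \<open>Vectors in R^n are functions nat => real, only indices < n matter.
  Squared l2-norm of x with its k largest-magnitude coordinates set to 0.\<close>
definition tail_sq :: "nat \<Rightarrow> (nat \<Rightarrow> real) \<Rightarrow> nat \<Rightarrow> real" where
  "tail_sq n x k = sum_list (drop k (rev (sort (map (\<lambda>i. (x i)\<^sup>2) [0..<n]))))"

definition cs_sketch :: "nat \<Rightarrow> (nat \<times> nat \<Rightarrow> nat) \<Rightarrow> (nat \<times> nat \<Rightarrow> real) \<Rightarrow> (nat \<Rightarrow> real)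
    \<Rightarrow> nat \<Rightarrow> nat \<Rightarrow> real" where
  "cs_sketch n h s x u v = (\<Sum>j\<in>{j. j < n \<and> h (u, j) = v}. s (u, j) * x j)"

definition cs_est :: "nat \<Rightarrow> nat \<Rightarrow> (nat \<times> nat \<Rightarrow> nat) \<Rightarrow> (nat \<times> nat \<Rightarrow> real) \<Rightarrow> (nat \<Rightarrow> real)
    \<Rightarrow> nat \<Rightarrow> real" where
  "cs_est n R h s x i = median_list (map (\<lambda>u. s (u, i) * cs_sketch n h s x u (h (u, i))) [0..<R])"

definition cs_hashes :: "nat \<Rightarrow> nat \<Rightarrow> nat \<Rightarrow> ((nat \<times> nat \<Rightarrow> nat) \<times> (nat \<times> nat \<Rightarrow> real)) pmf" where
  "cs_hashes n R C = pmf_of_set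
     ((({0..<R} \<times> {0..<n}) \<rightarrow>\<^sub>E {0..<C}) \<times> (({0..<R} \<times> {0..<n}) \<rightarrow>\<^sub>E {-1, 1}))"

end

theory Submission
  imports Defs
begin

lemma count_filter_sort:
  "length (filter P (sort L)) = length (filter P L)"
  by (metis filter_sort length_sort)

lemma count_ge_from_sorted:
  fixes ys :: "real list"
  assumes "sorted ys" "m0 \<le> length ys" "P (ys ! m0) \<or> m0 = length ys"
    and mono: "\<And>j. m0 \<le> j \<Longrightarrow> j < length ys \<Longrightarrow> P (ys ! m0) \<Longrightarrow> P (ys ! j)"
  shows "length ys - m0 \<le> length (filter P ys)"
proof (cases "m0 = length ys")
  case True then show ?thesis by simp
next
  case False
  then have P0: "P (ys ! m0)" using assms by auto
  have "{m0..<length ys} \<subseteq> {j. j < length ys \<and> P (ys ! j)}"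
    using mono P0 by auto
  then have "card {m0..<length ys} \<le> card {j. j < length ys \<and> P (ys ! j)}"
    by (intro card_mono) auto
  then show ?thesis by (simp add: length_filter_conv_card)
qed

lemma median_gt:
  assumes "median_list L > b"
  shows "length L \<le> 2 * length (filter (\<lambda>v. v > b) L)"
proof -
  define ys where "ys = sort L"
  define m where "m = length L"
  have ys: "sorted ys" "length ys = m" unfolding ys_def m_def by auto
  show ?thesis
  proof (cases "m = 0")
    case True then show ?thesis by (simp add: m_def)
  next
    case False
    have key: "ys ! (m div 2) > b"
    proof (cases "odd m")
      case True
      then show ?thesis using assms unfolding median_list_def ys_def m_def Let_def by simp
    next
      case ev: False
      have "ys ! (m div 2 - 1) \<le> ys ! (m div 2)"
        using ys False by (intro sorted_nth_mono) auto
      moreover have "(ys ! (m div 2 - 1) + ys ! (m div 2)) / 2 > b"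
        using assms ev unfolding median_list_def ys_def m_def Let_def by simp
      ultimately show ?thesis by (simp add: field_simps)
    qed
    have "length ys - m div 2 \<le> length (filter (\<lambda>v. v > b) ys)"
    proof (rule count_ge_from_sorted[OF ys(1)])
      show "m div 2 \<le> length ys" using ys by auto
      show "b < ys ! (m div 2) \<or> m div 2 = length ys" using key by auto
      fix j assume "m div 2 \<le> j" "j < length ys"
      then have "ys ! (m div 2) \<le> ys ! j" using ys by (intro sorted_nth_mono) auto
      then show "b < ys ! j" using key by linarith
    qed
    then show ?thesis using ys unfolding ys_def m_def count_filter_sort by simp
  qed
qed

lemma count_le_from_sorted:
  fixes ys :: "real list"
  assumes "m0 < length ys" "P (ys ! m0)"
    and mono: "\<And>j. j \<le> m0 \<Longrightarrow> P (ys ! j)"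
  shows "Suc m0 \<le> length (filter P ys)"
proof -
  have "{0..<Suc m0} \<subseteq> {j. j < length ys \<and> P (ys ! j)}"
    using mono assms by auto
  then have "card {0..<Suc m0} \<le> card {j. j < length ys \<and> P (ys ! j)}"
    by (intro card_mono) auto
  then show ?thesis by (simp add: length_filter_conv_card)
qed

lemma median_lt:
  assumes "median_list L < b"
  shows "length L \<le> 2 * length (filter (\<lambda>v. v < b) L)"
proof -
  define ys where "ys = sort L"
  define m where "m = length L"
  have ys: "sorted ys" "length ys = m" unfolding ys_def m_def by auto
  show ?thesis
  proof (cases "m = 0")
    case True then show ?thesis by (simp add: m_def)
  next
    case False
    show ?thesis
    proof (cases "odd m")
      case True
      have key: "ys ! (m div 2) < b"
        using assms True unfolding median_list_def ys_def m_def Let_def by simp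
      have "Suc (m div 2) \<le> length (filter (\<lambda>v. v < b) ys)"
      proof (rule count_le_from_sorted)
        show "m div 2 < length ys" using ys False by auto
        show "ys ! (m div 2) < b" by fact
        fix j assume "j \<le> m div 2"
        then have "ys ! j \<le> ys ! (m div 2)" using ys False by (intro sorted_nth_mono) auto
        then show "ys ! j < b" using key by linarith
      qed
      then show ?thesis using ys True unfolding ys_def m_def count_filter_sort by simp
    next
      case ev: False
      have "ys ! (m div 2 - 1) \<le> ys ! (m div 2)"
        using ys False by (intro sorted_nth_mono) auto
      moreover have "(ys ! (m div 2 - 1) + ys ! (m div 2)) / 2 < b"
        using assms ev unfolding median_list_def ys_def m_def Let_def by simp
      ultimately have key: "ys ! (m div 2 - 1) < b" by (simp add: field_simps)
      have "Suc (m div 2 - 1) \<le> length (filter (\<lambda>v. v < b) ys)"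
      proof (rule count_le_from_sorted)
        show "m div 2 - 1 < length ys" using ys False by auto
        show "ys ! (m div 2 - 1) < b" by fact
        fix j assume "j \<le> m div 2 - 1"
        then have "ys ! j \<le> ys ! (m div 2 - 1)" using ys False by (intro sorted_nth_mono) auto
        then show "ys ! j < b" using key by linarith
      qed
      moreover have "length L div 2 \<ge> 1" using ev False m_def by presburger
      ultimately show ?thesis using ys ev False unfolding ys_def m_def count_filter_sort by auto
    qed
  qed
qed

definition Cp :: "nat \<Rightarrow> (nat \<times> real) pmf" where
  "Cp k = pmf_of_set ({0..<k} \<times> {-1, 1})"
definition rowP :: "nat \<Rightarrow> nat \<Rightarrow> (nat \<Rightarrow> nat \<times> real) pmf" where
  "rowP n k = Pi_pmf {0..<n} (0, 0) (\<lambda>_. Cp k)"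
definition bigP :: "nat \<Rightarrow> nat \<Rightarrow> nat \<Rightarrow> (nat \<Rightarrow> nat \<Rightarrow> nat \<times> real) pmf" where
  "bigP n R k = Pi_pmf {0..<R} (\<lambda>_. (0, 0)) (\<lambda>_. rowP n k)"
definition Phi :: "nat \<Rightarrow> nat \<Rightarrow> (nat \<Rightarrow> nat \<Rightarrow> nat \<times> real) \<Rightarrow> (nat \<times> nat \<Rightarrow> nat) \<times> (nat \<times> nat \<Rightarrow> real)" where
  "Phi n R \<omega> = ((\<lambda>p. if fst p < R \<and> snd p < n then fst (\<omega> (fst p) (snd p)) else undefined),
                 (\<lambda>p. if fst p < R \<and> snd p < n then snd (\<omega> (fst p) (snd p)) else undefined))"
definition Psi :: "nat \<Rightarrow> nat \<Rightarrow> (nat \<times> nat \<Rightarrow> nat) \<times> (nat \<times> nat \<Rightarrow> real) \<Rightarrow> (nat \<Rightarrow> nat \<Rightarrow> nat \<times> real)" where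
  "Psi n R hs = (\<lambda>u. if u < R then (\<lambda>j. if j < n then (fst hs (u, j), snd hs (u, j)) else (0, 0)) else (\<lambda>_. (0, 0)))"

lemma bigP_set:
  assumes "k \<ge> 1"
  shows "bigP n R k = pmf_of_set (PiE_dflt {0..<R} (\<lambda>_. (0, 0)) (\<lambda>_. PiE_dflt {0..<n} (0, 0) (\<lambda>_. {0..<k} \<times> {-1::real, 1})))"
proof -
  have ne: "{0..<k} \<times> {-1::real, 1} \<noteq> {}" using assms by auto
  have "rowP n k = pmf_of_set (PiE_dflt {0..<n} (0, 0) (\<lambda>_. {0..<k} \<times> {-1::real, 1}))"
    unfolding rowP_def Cp_def using ne by (intro Pi_pmf_of_set) auto
  then show ?thesis unfolding bigP_def using ne
    by (simp only:) (intro Pi_pmf_of_set, auto)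
qed

lemma cs_hashes_decomp:
  assumes "k \<ge> 1"
  shows "cs_hashes n R k = map_pmf (Phi n R) (bigP n R k)"
proof -
  define \<Omega> where "\<Omega> = PiE_dflt {0..<R} (\<lambda>_. (0, 0)) (\<lambda>_. PiE_dflt {0..<n} (0, 0) (\<lambda>_. {0..<k} \<times> {-1::real, 1}))"
  define AB where "AB = ((({0..<R} \<times> {0..<n}) \<rightarrow>\<^sub>E {0..<k}) \<times> (({0..<R} \<times> {0..<n}) \<rightarrow>\<^sub>E {-1::real, 1}))"
  have ne: "{0..<k} \<times> {-1::real, 1} \<noteq> {}" using assms by auto
  have fin: "finite \<Omega>" unfolding \<Omega>_def by (intro finite_PiE_dflt) auto
  have nonempty: "\<Omega> \<noteq> {}" unfolding \<Omega>_def using ne by simp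
  have bij: "bij_betw (Phi n R) \<Omega> AB"
  proof (rule bij_betwI[where g = "Psi n R"])
    show "Phi n R \<in> \<Omega> \<rightarrow> AB"
      unfolding \<Omega>_def AB_def Phi_def PiE_dflt_def by (auto simp: PiE_def extensional_def mem_Times_iff)
    show "Psi n R \<in> AB \<rightarrow> \<Omega>"
      unfolding \<Omega>_def AB_def Psi_def PiE_dflt_def by (auto simp: PiE_def Pi_def)
    fix \<omega> assume "\<omega> \<in> \<Omega>"
    then show "Psi n R (Phi n R \<omega>) = \<omega>"
      unfolding \<Omega>_def Psi_def Phi_def PiE_dflt_def by (auto simp: fun_eq_iff)
  next
    fix hs assume hs: "hs \<in> AB"
    obtain h s where [simp]: "hs = (h, s)" by (cases hs)
    have "h p = undefined" if "\<not> (fst p < R \<and> snd p < n)" for p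
      using hs that unfolding AB_def by (cases p) (auto simp: PiE_def extensional_def)
    moreover have "s p = undefined" if "\<not> (fst p < R \<and> snd p < n)" for p
      using hs that unfolding AB_def by (cases p) (auto simp: PiE_def extensional_def)
    ultimately show "Phi n R (Psi n R hs) = hs"
      unfolding Psi_def Phi_def by (auto simp: fun_eq_iff)
  qed
  have "cs_hashes n R k = pmf_of_set AB" unfolding cs_hashes_def AB_def ..
  also have "\<dots> = map_pmf (Phi n R) (pmf_of_set \<Omega>)"
    using bij fin nonempty by (simp add: map_pmf_of_set_bij_betw)
  also have "pmf_of_set \<Omega> = bigP n R k" unfolding \<Omega>_def using bigP_set[OF assms] by simp
  finally show ?thesis .
qed

definition Zr :: "nat \<Rightarrow> (nat \<Rightarrow> real) \<Rightarrow> nat \<Rightarrow> (nat \<Rightarrow> nat \<times> real) \<Rightarrow> real" where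
  "Zr n x i r = (\<Sum>j\<in>{0..<n}-{i}. x j * (if fst (r j) = fst (r i) then snd (r i) * snd (r j) else 0))"

lemma row_identity:
  assumes "i < n" "snd (r i) \<in> {-1, 1}"
  shows "snd (r i) * (\<Sum>j\<in>{j. j < n \<and> fst (r j) = fst (r i)}. snd (r j) * x j) = Zr n x i r + x i"
proof -
  have "(\<Sum>j\<in>{j. j < n \<and> fst (r j) = fst (r i)}. snd (r j) * x j)
      = (\<Sum>j\<in>{0..<n}. if fst (r j) = fst (r i) then snd (r j) * x j else 0)"
  proof -
    have "{j. j < n \<and> fst (r j) = fst (r i)} = {j\<in>{0..<n}. fst (r j) = fst (r i)}" by auto
    then show ?thesis by (simp only: sum.inter_filter[OF finite_atLeastLessThan])
  qed
  also have "\<dots> = snd (r i) * x i + (\<Sum>j\<in>{0..<n}-{i}. if fst (r j) = fst (r i) then snd (r j) * x j else 0)"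
    using assms by (subst sum.remove[of _ i]) auto
  finally have "snd (r i) * (\<Sum>j\<in>{j. j < n \<and> fst (r j) = fst (r i)}. snd (r j) * x j)
     = snd (r i) * snd (r i) * x i + (\<Sum>j\<in>{0..<n}-{i}. snd (r i) * (if fst (r j) = fst (r i) then snd (r j) * x j else 0))"
    by (simp add: distrib_left sum_distrib_left mult.assoc)
  also have "snd (r i) * snd (r i) = 1" using assms(2) by auto
  also have "(\<Sum>j\<in>{0..<n}-{i}. snd (r i) * (if fst (r j) = fst (r i) then snd (r j) * x j else 0)) = Zr n x i r"
    unfolding Zr_def by (intro sum.cong) auto
  finally show ?thesis by simp
qed

lemma est_identity:
  assumes "k \<ge> 1" "i < n" "\<omega> \<in> set_pmf (bigP n R k)"
  shows "cs_est n R (fst (Phi n R \<omega>)) (snd (Phi n R \<omega>)) x i = median_list (map (\<lambda>u. Zr n x i (\<omega> u) + x i) [0..<R])"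
proof -
  have \<omega>: "\<omega> \<in> PiE_dflt {0..<R} (\<lambda>_. (0, 0)) (\<lambda>_. PiE_dflt {0..<n} (0, 0) (\<lambda>_. {0..<k} \<times> {-1::real, 1}))"
    using assms(3) unfolding bigP_set[OF assms(1)]
    using assms(1) by (subst (asm) set_pmf_of_set) auto
  show ?thesis
    unfolding cs_est_def
  proof (intro arg_cong[where f = median_list] map_cong refl)
    fix u assume "u \<in> set [0..<R]"
    then have u: "u < R" by simp
    have si: "snd (\<omega> u i) \<in> {-1, 1}"
      using \<omega> u assms(2) unfolding PiE_dflt_def by (auto simp: mem_Times_iff)
    have "cs_sketch n (fst (Phi n R \<omega>)) (snd (Phi n R \<omega>)) x u (fst (Phi n R \<omega>) (u, i))
        = (\<Sum>j\<in>{j. j < n \<and> fst (\<omega> u j) = fst (\<omega> u i)}. snd (\<omega> u j) * x j)"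
      unfolding cs_sketch_def Phi_def using u assms(2) by (intro sum.cong) auto
    then show "snd (Phi n R \<omega>) (u, i) * cs_sketch n (fst (Phi n R \<omega>)) (snd (Phi n R \<omega>)) x u (fst (Phi n R \<omega>) (u, i))
        = Zr n x i (\<omega> u) + x i"
      using row_identity[of i n "\<omega> u" x] assms(2) si u assms(2) by (simp add: Phi_def)
  qed
qed

lemma map_pmf_indicator_bernoulli:
  "map_pmf (\<lambda>r. r \<in> B) M = bernoulli_pmf (measure_pmf.prob M B)"
proof (rule pmf_eqI)
  fix b :: bool
  have p: "0 \<le> measure_pmf.prob M B" "measure_pmf.prob M B \<le> 1" by auto
  show "pmf (map_pmf (\<lambda>r. r \<in> B) M) b = pmf (bernoulli_pmf (measure_pmf.prob M B)) b"
  proof (cases b)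
    case True
    have "(\<lambda>r. r \<in> B) -` {True} = B" by auto
    then show ?thesis using True p by (simp add: pmf_map)
  next
    case False
    have "(\<lambda>r. r \<in> B) -` {False} = UNIV - B" by auto
    then show ?thesis using False p measure_pmf.prob_compl[of B M] by (simp add: pmf_map)
  qed
qed

lemma binom_tail:
  fixes M :: "'a pmf" and B :: "'a set"
  assumes R: "R \<ge> 1" and eps: "\<epsilon> \<ge> 0" and p: "measure_pmf.prob M B \<le> 1/2 - \<epsilon>"
  shows "measure_pmf.prob (Pi_pmf {0..<R} d (\<lambda>_. M)) {\<omega>. real R \<le> 2 * real (card {u\<in>{0..<R}. \<omega> u \<in> B})}
          \<le> exp (- 2 * real R * \<epsilon>\<^sup>2)"
proof -
  define q where "q = measure_pmf.prob M B"
  have q: "q \<in> {0..1}" unfolding q_def by auto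
  define f where "f = (\<lambda>r. r \<in> B)"
  have "map_pmf (\<lambda>\<omega>. card {u\<in>{0..<R}. \<omega> u \<in> B}) (Pi_pmf {0..<R} d (\<lambda>_. M))
      = map_pmf (\<lambda>g. card {u\<in>{0..<R}. g u}) (map_pmf (\<lambda>h. f \<circ> h) (Pi_pmf {0..<R} d (\<lambda>_. M)))"
    by (simp add: pmf.map_comp o_def f_def)
  also have "map_pmf (\<lambda>h. f \<circ> h) (Pi_pmf {0..<R} d (\<lambda>_. M)) = Pi_pmf {0..<R} (f d) (\<lambda>_. map_pmf f M)"
    by (rule Pi_pmf_map[symmetric]) auto
  also have "map_pmf f M = bernoulli_pmf q"
    unfolding f_def q_def by (rule map_pmf_indicator_bernoulli)
  also have "map_pmf (\<lambda>g. card {u\<in>{0..<R}. g u}) (Pi_pmf {0..<R} (f d) (\<lambda>_. bernoulli_pmf q)) = binomial_pmf R q"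
    by (rule binomial_pmf_altdef'[symmetric]) (use q in auto)
  finally have eq: "map_pmf (\<lambda>\<omega>. card {u\<in>{0..<R}. \<omega> u \<in> B}) (Pi_pmf {0..<R} d (\<lambda>_. M)) = binomial_pmf R q" .
  have "measure_pmf.prob (Pi_pmf {0..<R} d (\<lambda>_. M)) {\<omega>. real R \<le> 2 * real (card {u\<in>{0..<R}. \<omega> u \<in> B})}
      = measure_pmf.prob (map_pmf (\<lambda>\<omega>. card {u\<in>{0..<R}. \<omega> u \<in> B}) (Pi_pmf {0..<R} d (\<lambda>_. M))) {c. real R \<le> 2 * real c}"
    by simp
  also have "\<dots> = measure_pmf.prob (binomial_pmf R q) {c. real R \<le> 2 * real c}" by (simp only: eq)
  also have "\<dots> \<le> measure_pmf.prob (binomial_pmf R q) {c. real c / real R \<ge> q + \<epsilon>}"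
  proof (rule measure_pmf.finite_measure_mono)
    show "{c. real R \<le> 2 * real c} \<subseteq> {c. real c / real R \<ge> q + \<epsilon>}"
    proof
      fix c assume "c \<in> {c. real R \<le> 2 * real c}"
      then have "real c / real R \<ge> 1/2" using R by (simp add: field_simps)
      then have "real c / real R \<ge> q + \<epsilon>" using p q_def by linarith
      then show "c \<in> {c. real c / real R \<ge> q + \<epsilon>}" by simp
    qed
  qed auto
  also have "\<dots> \<le> exp (- 2 * real R * \<epsilon>\<^sup>2)"
  proof -
    interpret binomial_distribution R q using q by unfold_locales
    show ?thesis using prob_ge'[OF _ eps] R by simp
  qed
  finally show ?thesis .
qed

definition bp :: "nat \<Rightarrow> real" where "bp k = (1 - sqrt (1 - 2 / real k)) / 2"

definition wd :: "nat \<Rightarrow> real pmf" where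
  "wd k = map_pmf (\<lambda>(a, b). of_bool a - of_bool b) (pair_pmf (bernoulli_pmf (bp k)) (bernoulli_pmf (bp k)))"

definition gy :: "nat \<times> real \<Rightarrow> nat \<times> real \<Rightarrow> real" where
  "gy y z = (if fst z = fst y then snd y * snd z else 0)"

lemma bp_props:
  assumes "k \<ge> 2"
  shows "0 \<le> bp k" "bp k \<le> 1/2" "bp k * (1 - bp k) = 1 / (2 * real k)"
proof -
  have k: "real k \<ge> 2" using assms by simp
  have r: "0 \<le> 1 - 2 / real k" "1 - 2 / real k \<le> 1" using k by (auto simp: field_simps)
  then have s: "0 \<le> sqrt (1 - 2 / real k)" "sqrt (1 - 2 / real k) \<le> 1" by auto
  show "0 \<le> bp k" "bp k \<le> 1/2" unfolding bp_def using s by auto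
  have "bp k * (1 - bp k) = (1 - (sqrt (1 - 2 / real k))\<^sup>2) / 4"
    unfolding bp_def by (simp add: field_simps power2_eq_square)
  also have "(sqrt (1 - 2 / real k))\<^sup>2 = 1 - 2 / real k" using r by simp
  finally show "bp k * (1 - bp k) = 1 / (2 * real k)" using k by (simp add: field_simps)
qed

lemma pmf_wd:
  assumes "k \<ge> 2"
  shows "pmf (wd k) v = (if v = 1 \<or> v = -1 then 1 / (2 * real k) else if v = 0 then 1 - 1 / real k else 0)"
proof -
  define p where "p = bp k"
  have p: "0 \<le> p" "p \<le> 1" "p * (1 - p) = 1 / (2 * real k)" using bp_props[OF assms] unfolding p_def by auto
  define D where "D = (\<lambda>(a::bool, b::bool). of_bool a - (of_bool b :: real))"
  have "pmf (wd k) v = measure_pmf.prob (pair_pmf (bernoulli_pmf p) (bernoulli_pmf p)) (D -` {v})"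
    unfolding wd_def pmf_map D_def p_def by simp
  also have "\<dots> = (\<Sum>z\<in>D -` {v}. pmf (pair_pmf (bernoulli_pmf p) (bernoulli_pmf p)) z)"
    by (rule measure_measure_pmf_finite) simp
  also have "\<dots> = (\<Sum>z\<in>D -` {v}. pmf (bernoulli_pmf p) (fst z) * pmf (bernoulli_pmf p) (snd z))"
    by (intro sum.cong) (auto simp: pmf_pair)
  also have "\<dots> = (if v = 1 \<or> v = -1 then 1 / (2 * real k) else if v = 0 then 1 - 1 / real k else 0)"
  proof -
    have "D -` {v} = (if v = 1 then {(True, False)} else if v = -1 then {(False, True)}
             else if v = 0 then {(True, True), (False, False)} else {})"
      unfolding D_def by (auto simp: of_bool_def split: if_splits)
    moreover have "p * p + (1 - p) * (1 - p) = 1 - 1 / real k"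
      using p(3) by (simp add: field_simps)
    ultimately show ?thesis using p by (auto simp: mult.commute)
  qed
  finally show ?thesis .
qed

lemma pmf_gy:
  assumes "k \<ge> 2" "y \<in> {0..<k} \<times> {-1, 1}"
  shows "pmf (map_pmf (gy y) (Cp k)) v = (if v = 1 \<or> v = -1 then 1 / (2 * real k) else if v = 0 then 1 - 1 / real k else 0)"
proof -
  define S where "S = {0..<k} \<times> {-1::real, 1}"
  have cS: "card S = 2 * k" unfolding S_def by (simp add: card_cartesian_product)
  have y: "fst y < k" "snd y = 1 \<or> snd y = -1" using assms(2) by (auto simp: mem_Times_iff)
  have "pmf (map_pmf (gy y) (Cp k)) v = real (card (S \<inter> gy y -` {v})) / real (card S)"
    unfolding pmf_map Cp_def S_def[symmetric] using assms(1) unfolding S_def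
    by (subst measure_pmf_of_set) auto
  also have "S \<inter> gy y -` {v} = (if v = 1 then {(fst y, snd y)} else if v = -1 then {(fst y, - snd y)}
             else if v = 0 then ({0..<k} - {fst y}) \<times> {-1, 1} else {})"
    using y unfolding S_def gy_def by (cases y) (auto split: if_splits)
  finally show ?thesis
    using assms(1) y cS by (auto simp: card_cartesian_product field_simps)
qed

lemma map_gy_eq_wd:
  assumes "k \<ge> 2" "y \<in> {0..<k} \<times> {-1, 1}"
  shows "map_pmf (gy y) (Cp k) = wd k"
  by (rule pmf_eqI) (simp only: pmf_gy[OF assms] pmf_wd[OF assms(1)])

lemma Pi_pair_split:
  assumes "finite J"
  shows "map_pmf (\<lambda>h. (fst \<circ> h, snd \<circ> h)) (Pi_pmf J (d1, d2) (\<lambda>j. pair_pmf (A j) (B j)))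
       = pair_pmf (Pi_pmf J d1 A) (Pi_pmf J d2 B)"
proof (rule pmf_eqI)
  fix z :: "('a \<Rightarrow> 'b) \<times> ('a \<Rightarrow> 'c)"
  obtain f1 f2 where z: "z = (f1, f2)" by (cases z)
  define g where "g = (\<lambda>j. (f1 j, f2 j))"
  have pre: "(\<lambda>h. (fst \<circ> h, snd \<circ> h)) -` {z} = {g}"
    unfolding z g_def by (auto simp: fun_eq_iff)
  have "pmf (map_pmf (\<lambda>h. (fst \<circ> h, snd \<circ> h)) (Pi_pmf J (d1, d2) (\<lambda>j. pair_pmf (A j) (B j)))) z
       = pmf (Pi_pmf J (d1, d2) (\<lambda>j. pair_pmf (A j) (B j))) g"
    by (simp add: pmf_map pre measure_pmf_single)
  also have "\<dots> = pmf (pair_pmf (Pi_pmf J d1 A) (Pi_pmf J d2 B)) z"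
    unfolding z pmf_pair using assms
    by (auto simp: pmf_Pi g_def pmf_pair prod.distrib)
  finally show "pmf (map_pmf (\<lambda>h. (fst \<circ> h, snd \<circ> h)) (Pi_pmf J (d1, d2) (\<lambda>j. pair_pmf (A j) (B j)))) z
       = pmf (pair_pmf (Pi_pmf J d1 A) (Pi_pmf J d2 B)) z" .
qed

definition Uf :: "(nat \<Rightarrow> real) \<Rightarrow> nat set \<Rightarrow> (nat \<Rightarrow> bool) \<Rightarrow> real" where
  "Uf x J f = (\<Sum>j\<in>J. x j * of_bool (f j))"

definition Pb :: "nat set \<Rightarrow> nat \<Rightarrow> (nat \<Rightarrow> bool) pmf" where
  "Pb J k = Pi_pmf J False (\<lambda>_. bernoulli_pmf (bp k))"

lemma map_pair_bind: "map_pmf (\<lambda>(y, f). F y f) (pair_pmf A B) = bind_pmf A (\<lambda>y. map_pmf (F y) B)"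
  by (simp add: pair_pmf_def map_pmf_def bind_assoc_pmf bind_return_pmf)

lemma row_law:
  assumes k: "k \<ge> 2" and i: "i < n"
  shows "map_pmf (Zr n x i) (rowP n k) =
         map_pmf (\<lambda>(f, g). Uf x ({0..<n}-{i}) f - Uf x ({0..<n}-{i}) g) (pair_pmf (Pb ({0..<n}-{i}) k) (Pb ({0..<n}-{i}) k))"
proof -
  define J where "J = {0..<n} - {i}"
  have finJ: "finite J" unfolding J_def by simp
  have ins: "{0..<n} = insert i J" "i \<notin> J" unfolding J_def using i by auto
  define PiJ where "PiJ = Pi_pmf J (0, 0) (\<lambda>_. Cp k)"
  define b where "b = bernoulli_pmf (bp k)"
  define dif where "dif = (\<lambda>(a::bool, c::bool). of_bool a - (of_bool c :: real))"
  define W where "W = map_pmf (\<lambda>h. \<Sum>j\<in>J. x j * h j) (Pi_pmf J 0 (\<lambda>_. wd k))"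
  have "rowP n k = map_pmf (\<lambda>(y, f). f(i := y)) (pair_pmf (Cp k) PiJ)"
    unfolding rowP_def PiJ_def ins(1) using finJ ins(2) by (rule Pi_pmf_insert)
  then have "map_pmf (Zr n x i) (rowP n k) = map_pmf (\<lambda>(y, f). \<Sum>j\<in>J. x j * gy y (f j)) (pair_pmf (Cp k) PiJ)"
    by (simp add: pmf.map_comp o_def) (intro map_pmf_cong refl, auto simp: Zr_def J_def gy_def split: if_splits intro!: sum.cong)
  also have "\<dots> = bind_pmf (Cp k) (\<lambda>y. map_pmf (\<lambda>f. \<Sum>j\<in>J. x j * gy y (f j)) PiJ)"
    by (rule map_pair_bind)
  also have "\<dots> = bind_pmf (Cp k) (\<lambda>y. W)"
  proof (rule bind_pmf_cong[OF refl])
    fix y assume "y \<in> set_pmf (Cp k)"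
    then have y: "y \<in> {0..<k} \<times> {-1, 1}" unfolding Cp_def using k by (subst (asm) set_pmf_of_set) auto
    have "map_pmf (\<lambda>f. \<Sum>j\<in>J. x j * gy y (f j)) PiJ = map_pmf (\<lambda>h. \<Sum>j\<in>J. x j * h j) (map_pmf (\<lambda>f. gy y \<circ> f) PiJ)"
      by (simp add: pmf.map_comp o_def)
    also have "map_pmf (\<lambda>f. gy y \<circ> f) PiJ = Pi_pmf J 0 (\<lambda>_. map_pmf (gy y) (Cp k))"
      unfolding PiJ_def by (rule Pi_pmf_map[symmetric]) (auto simp: finJ gy_def)
    also have "(\<lambda>_. map_pmf (gy y) (Cp k)) = (\<lambda>_. wd k)" using map_gy_eq_wd[OF k y] by simp
    finally show "map_pmf (\<lambda>f. \<Sum>j\<in>J. x j * gy y (f j)) PiJ = W" unfolding W_def .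
  qed
  also have "\<dots> = W" by simp
  also have "W = map_pmf (\<lambda>h. \<Sum>j\<in>J. x j * h j) (Pi_pmf J 0 (\<lambda>_. map_pmf dif (pair_pmf b b)))"
    unfolding W_def wd_def dif_def b_def ..
  also have "Pi_pmf J 0 (\<lambda>_. map_pmf dif (pair_pmf b b)) = map_pmf (\<lambda>h. dif \<circ> h) (Pi_pmf J (False, False) (\<lambda>_. pair_pmf b b))"
    by (rule Pi_pmf_map) (auto simp: finJ dif_def)
  also have "map_pmf (\<lambda>h. \<Sum>j\<in>J. x j * h j) (map_pmf (\<lambda>h. dif \<circ> h) (Pi_pmf J (False, False) (\<lambda>_. pair_pmf b b)))
      = map_pmf (\<lambda>(f, g). Uf x J f - Uf x J g) (map_pmf (\<lambda>h. (fst \<circ> h, snd \<circ> h)) (Pi_pmf J (False, False) (\<lambda>_. pair_pmf b b)))"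
    by (simp add: pmf.map_comp o_def Uf_def dif_def case_prod_beta sum_subtractf[symmetric] algebra_simps)
  also have "map_pmf (\<lambda>h. (fst \<circ> h, snd \<circ> h)) (Pi_pmf J (False, False) (\<lambda>_. pair_pmf b b)) = pair_pmf (Pb J k) (Pb J k)"
    unfolding Pb_def b_def by (rule Pi_pair_split[OF finJ])
  finally show ?thesis unfolding J_def .
qed

lemma finite_set_Pi_pmf_bool: "finite (J::nat set) \<Longrightarrow> finite (set_pmf (Pi_pmf J False (\<lambda>_. bernoulli_pmf p)))"
  by (rule finite_subset[OF set_Pi_pmf_subset'[of J False]]) (auto intro!: finite_PiE_dflt)

lemma exp_component:
  fixes g :: "bool \<Rightarrow> real"
  assumes "finite (J::nat set)" "j \<in> J"
  shows "measure_pmf.expectation (Pi_pmf J False (\<lambda>_. bernoulli_pmf p)) (\<lambda>f. g (f j))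
       = measure_pmf.expectation (bernoulli_pmf p) g"
proof -
  have "measure_pmf.expectation (Pi_pmf J False (\<lambda>_. bernoulli_pmf p)) (\<lambda>f. g (f j))
      = measure_pmf.expectation (map_pmf (\<lambda>f. f j) (Pi_pmf J False (\<lambda>_. bernoulli_pmf p))) g"
    by (simp only: integral_map_pmf)
  also have "map_pmf (\<lambda>f. f j) (Pi_pmf J False (\<lambda>_. bernoulli_pmf p)) = bernoulli_pmf p"
    using assms by (subst Pi_pmf_component) auto
  finally show ?thesis .
qed

lemma exp_two_components:
  assumes "finite (J::nat set)" "j \<in> J" "l \<in> J" "j \<noteq> l" "0 \<le> p" "p \<le> 1"
  shows "measure_pmf.expectation (Pi_pmf J False (\<lambda>_. bernoulli_pmf p)) (\<lambda>f. of_bool (f j) * of_bool (f l) :: real) = p * p"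
proof -
  define F where "F = (\<lambda>x (v::bool). if x = j \<or> x = l then of_bool v else (1::real))"
  have eq: "(\<lambda>f. of_bool (f j) * of_bool (f l) :: real) = (\<lambda>f. \<Prod>x\<in>J. F x (f x))"
  proof
    fix f :: "nat \<Rightarrow> bool"
    have "(\<Prod>x\<in>J. F x (f x)) = F j (f j) * (\<Prod>x\<in>J-{j}. F x (f x))"
      using assms by (subst prod.remove[of _ j]) auto
    also have "(\<Prod>x\<in>J-{j}. F x (f x)) = F l (f l) * (\<Prod>x\<in>J-{j}-{l}. F x (f x))"
      using assms by (subst prod.remove[of _ l]) auto
    also have "(\<Prod>x\<in>J-{j}-{l}. F x (f x)) = 1"
      by (intro prod.neutral) (auto simp: F_def)
    finally show "of_bool (f j) * of_bool (f l) = (\<Prod>x\<in>J. F x (f x))"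
      using assms by (simp add: F_def)
  qed
  have "measure_pmf.expectation (Pi_pmf J False (\<lambda>_. bernoulli_pmf p)) (\<lambda>f. \<Prod>x\<in>J. F x (f x))
      = (\<Prod>x\<in>J. measure_pmf.expectation (bernoulli_pmf p) (F x))"
    by (rule expectation_prod_Pi_pmf) (auto simp: assms F_def intro!: integrable_measure_pmf_finite)
  also have "\<dots> = (\<Prod>x\<in>J. if x = j \<or> x = l then p else 1)"
    using assms by (intro prod.cong) (auto simp: F_def)
  also have "\<dots> = p * (\<Prod>x\<in>J-{j}. if x = j \<or> x = l then p else 1)"
    using assms by (subst prod.remove[of _ j]) auto
  also have "(\<Prod>x\<in>J-{j}. if x = j \<or> x = l then p else 1) = p * (\<Prod>x\<in>J-{j}-{l}. if x = j \<or> x = l then p else 1)"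
    using assms by (subst prod.remove[of _ l]) auto
  also have "(\<Prod>x\<in>J-{j}-{l}. if x = j \<or> x = l then p else 1) = 1"
    by (intro prod.neutral) auto
  finally show ?thesis by (simp add: eq)
qed

lemma var_Pi_bool:
  assumes "finite (J::nat set)" "S \<subseteq> J" "0 \<le> p" "p \<le> 1"
  shows "measure_pmf.variance (Pi_pmf J False (\<lambda>_. bernoulli_pmf p)) (\<lambda>f. \<Sum>j\<in>S. c j * of_bool (f j))
       = (\<Sum>j\<in>S. (c j)\<^sup>2) * (p * (1 - p))"
proof -
  define M where "M = Pi_pmf J False (\<lambda>_. bernoulli_pmf p)"
  have fin: "finite (set_pmf M)" unfolding M_def by (rule finite_set_Pi_pmf_bool[OF assms(1)])
  have int: "integrable M g" for g :: "_ \<Rightarrow> real" by (rule integrable_measure_pmf_finite[OF fin])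
  have finS: "finite S" using assms finite_subset by auto
  define X where "X = (\<lambda>f. \<Sum>j\<in>S. c j * of_bool (f j) :: real)"
  have EB: "measure_pmf.expectation M (\<lambda>f. of_bool (f j) :: real) = p" if "j \<in> S" for j
    unfolding M_def using assms that by (subst exp_component) auto
  have EBB: "measure_pmf.expectation M (\<lambda>f. of_bool (f j) * of_bool (f l) :: real) = (if j = l then p else p * p)"
    if "j \<in> S" "l \<in> S" for j l
  proof (cases "j = l")
    case True
    have "(\<lambda>f. of_bool (f j) * of_bool (f l) :: real) = (\<lambda>f. of_bool (f j))" using True by auto
    then show ?thesis using EB[OF that(1)] True by simp
  next
    case False then show ?thesis unfolding M_def using assms that by (subst exp_two_components) auto
  qed
  have EX: "measure_pmf.expectation M X = (\<Sum>j\<in>S. c j * p)"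
    unfolding X_def by (subst Bochner_Integration.integral_sum) (auto simp: int EB)
  have "(\<lambda>f. (X f)\<^sup>2) = (\<lambda>f. \<Sum>j\<in>S. \<Sum>l\<in>S. c j * c l * (of_bool (f j) * of_bool (f l)))"
    unfolding X_def power2_eq_square sum_product by (simp add: algebra_simps)
  then have EX2: "measure_pmf.expectation M (\<lambda>f. (X f)\<^sup>2) = (\<Sum>j\<in>S. \<Sum>l\<in>S. c j * c l * (if j = l then p else p * p))"
    by (simp add: Bochner_Integration.integral_sum int EBB)
  have "measure_pmf.variance M X = (\<Sum>j\<in>S. \<Sum>l\<in>S. c j * c l * (if j = l then p else p * p)) - (\<Sum>j\<in>S. c j * p)\<^sup>2"
    by (subst measure_pmf.variance_eq) (auto simp: int EX EX2)
  also have "(\<Sum>j\<in>S. c j * p)\<^sup>2 = (\<Sum>j\<in>S. \<Sum>l\<in>S. c j * c l * (p * p))"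
    unfolding power2_eq_square sum_product by (simp add: algebra_simps)
  also have "(\<Sum>j\<in>S. \<Sum>l\<in>S. c j * c l * (if j = l then p else p * p)) - (\<Sum>j\<in>S. \<Sum>l\<in>S. c j * c l * (p * p))
       = (\<Sum>j\<in>S. \<Sum>l\<in>S. if l = j then c j * c j * (p - p * p) else 0)"
    by (simp add: sum_subtractf[symmetric] algebra_simps) (intro sum.cong refl, auto simp: algebra_simps)
  also have "\<dots> = (\<Sum>j\<in>S. c j * c j * (p - p * p))"
    using finS by (intro sum.cong refl) simp
  also have "\<dots> = (\<Sum>j\<in>S. (c j)\<^sup>2) * (p * (1 - p))"
    unfolding sum_distrib_right by (intro sum.cong) (auto simp: power2_eq_square algebra_simps)
  finally show ?thesis unfolding M_def X_def .
qed

lemma sum_sq_CS: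
  fixes a :: "nat \<Rightarrow> real"
  assumes "N \<ge> 1"
  shows "(\<Sum>m<N. a m)\<^sup>2 \<le> real N * (\<Sum>m<N. (a m)\<^sup>2)"
proof -
  define s where "s = (\<Sum>m<N. a m)"
  have N: "real N > 0" using assms by simp
  have "0 \<le> (\<Sum>m<N. (a m - s / N)\<^sup>2)" by (intro sum_nonneg) auto
  also have "\<dots> = (\<Sum>m<N. (a m)\<^sup>2) - 2 * (s / N) * s + real N * (s / N)\<^sup>2"
  proof -
    have gen: "(\<Sum>m<N. (a m - c)\<^sup>2) = (\<Sum>m<N. (a m)\<^sup>2) - 2*c*(\<Sum>m<N. a m) + real N*c\<^sup>2" for c
      by (simp add: power2_diff sum.distrib sum_subtractf sum_distrib_left[symmetric] sum_distrib_right[symmetric] mult.commute mult.left_commute)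
    show ?thesis unfolding gen s_def by simp
  qed
  also have "\<dots> = (\<Sum>m<N. (a m)\<^sup>2) - s\<^sup>2 / N"
    using N by (simp add: field_simps power2_eq_square)
  finally show ?thesis using N unfolding s_def by (simp add: field_simps)
qed

lemma pmf_prob_square:
  "measure_pmf.prob (pair_pmf M M) (A \<times> A) = (measure_pmf.prob M A)\<^sup>2"
proof -
  have "measure_pmf.prob (pair_pmf M M) (A \<times> A) = measure_pmf.prob (pair_pmf M M) ((A \<times> A) \<inter> set_pmf (pair_pmf M M))"
    by (rule measure_Int_set_pmf[symmetric])
  also have "(A \<times> A) \<inter> set_pmf (pair_pmf M M) = (A \<inter> set_pmf M) \<times> (A \<inter> set_pmf M)" by auto
  also have "measure_pmf.prob (pair_pmf M M) \<dots> = measure_pmf.prob M (A \<inter> set_pmf M) * measure_pmf.prob M (A \<inter> set_pmf M)"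
    by (intro measure_pmf_prob_product) auto
  finally show ?thesis by (simp add: measure_Int_set_pmf power2_eq_square)
qed

lemma pigeonhole_smallball:
  fixes U :: "'a \<Rightarrow> real"
  assumes a: "a > 0" and N: "N \<ge> 1"
  shows "(measure_pmf.prob M {f. L0 \<le> U f \<and> U f < L0 + real N * a})\<^sup>2 / real N
       \<le> measure_pmf.prob (pair_pmf M M) {z. \<bar>U (fst z) - U (snd z)\<bar> \<le> a}"
proof -
  define A where "A = (\<lambda>m::nat. {f. L0 + real m * a \<le> U f \<and> U f < L0 + real (Suc m) * a})"
  have disj: "disjoint_family_on A {..<N}"
  proof (unfold disjoint_family_on_def, intro ballI impI)
    fix m m' assume "m \<in> {..<N}" "m' \<in> {..<N}" "m \<noteq> m'"
    show "A m \<inter> A m' = {}"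
    proof (rule ccontr)
      assume "A m \<inter> A m' \<noteq> {}"
      then obtain f where f: "f \<in> A m" "f \<in> A m'" by blast
      have "L0 + real m * a < L0 + real (Suc m') * a" "L0 + real m' * a < L0 + real (Suc m) * a"
        using f unfolding A_def by auto
      then have "real m < real (Suc m')" "real m' < real (Suc m)" using a by (auto simp: mult_less_cancel_right)
      then show False using \<open>m \<noteq> m'\<close> by linarith
    qed
  qed
  have disj2: "disjoint_family_on (\<lambda>m. A m \<times> A m) {..<N}"
    using disj unfolding disjoint_family_on_def by auto
  have union: "{f. L0 \<le> U f \<and> U f < L0 + real N * a} = (\<Union>m\<in>{..<N}. A m)"
  proof (intro equalityI subsetI)
    fix f assume "f \<in> {f. L0 \<le> U f \<and> U f < L0 + real N * a}"
    then have f: "L0 \<le> U f" "U f < L0 + real N * a" by auto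
    define m where "m = nat \<lfloor>(U f - L0) / a\<rfloor>"
    have q0: "0 \<le> (U f - L0) / a" using f a by auto
    have "real m \<le> (U f - L0) / a" unfolding m_def using q0 by linarith
    then have l: "L0 + real m * a \<le> U f" using a by (simp add: field_simps)
    have "(U f - L0) / a < real m + 1" unfolding m_def using q0 by linarith
    then have u: "U f < L0 + real (Suc m) * a" using a by (simp add: field_simps)
    have "(U f - L0) / a < real N" using f a by (simp add: field_simps)
    then have "m < N" unfolding m_def using q0 by (simp add: nat_less_iff floor_less_iff)
    then show "f \<in> (\<Union>m\<in>{..<N}. A m)" using l u unfolding A_def by auto
  next
    fix f assume "f \<in> (\<Union>m\<in>{..<N}. A m)"
    then obtain m where m: "m < N" "f \<in> A m" by auto
    have "real m * a \<ge> 0" using a by simp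
    moreover have "real (Suc m) * a \<le> real N * a" using m a by (intro mult_right_mono) auto
    ultimately show "f \<in> {f. L0 \<le> U f \<and> U f < L0 + real N * a}" using m unfolding A_def by auto
  qed
  have "measure_pmf.prob M {f. L0 \<le> U f \<and> U f < L0 + real N * a} = (\<Sum>m<N. measure_pmf.prob M (A m))"
    unfolding union by (rule measure_pmf.finite_measure_finite_Union) (auto simp: disj)
  then have "(measure_pmf.prob M {f. L0 \<le> U f \<and> U f < L0 + real N * a})\<^sup>2 / real N
      \<le> (\<Sum>m<N. (measure_pmf.prob M (A m))\<^sup>2)"
    using sum_sq_CS[OF N, of "\<lambda>m. measure_pmf.prob M (A m)"] N by (simp add: field_simps)
  also have "\<dots> = (\<Sum>m<N. measure_pmf.prob (pair_pmf M M) (A m \<times> A m))"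
    by (simp add: pmf_prob_square)
  also have "\<dots> = measure_pmf.prob (pair_pmf M M) (\<Union>m\<in>{..<N}. A m \<times> A m)"
    by (rule measure_pmf.finite_measure_finite_Union[symmetric]) (auto simp: disj2)
  also have "\<dots> \<le> measure_pmf.prob (pair_pmf M M) {z. \<bar>U (fst z) - U (snd z)\<bar> \<le> a}"
  proof (rule measure_pmf.finite_measure_mono)
    show "(\<Union>m\<in>{..<N}. A m \<times> A m) \<subseteq> {z. \<bar>U (fst z) - U (snd z)\<bar> \<le> a}"
    proof
      fix z assume "z \<in> (\<Union>m\<in>{..<N}. A m \<times> A m)"
      then obtain m where "fst z \<in> A m" "snd z \<in> A m" by auto
      then show "z \<in> {z. \<bar>U (fst z) - U (snd z)\<bar> \<le> a}" unfolding A_def by (auto simp: algebra_simps)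
    qed
  qed auto
  finally show ?thesis .
qed

lemma exp_le_1mp:
  fixes p :: real
  assumes "0 \<le> p" "p \<le> 1/2"
  shows "exp (-2 * p) \<le> 1 - p"
proof -
  have e: "1 + 2 * p \<le> exp (2 * p)" using exp_ge_add_one_self[of "2*p"] by simp
  have "exp (-2 * p) = 1 / exp (2 * p)" by (simp add: exp_minus field_simps)
  also have "\<dots> \<le> 1 / (1 + 2 * p)" using e assms by (intro divide_left_mono) auto
  also have "\<dots> \<le> 1 - p" using assms by (simp add: field_simps) (metis mult_left_mono mult.right_neutral)
  finally show ?thesis .
qed

lemma bp_le: assumes "k \<ge> 2" shows "bp k \<le> 1 / real k"
proof -
  have b: "0 \<le> bp k" "bp k \<le> 1/2" "bp k * (1 - bp k) = 1 / (2 * real k)" using bp_props[OF assms] by auto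
  have "bp k * (1/2) \<le> bp k * (1 - bp k)" using b by (intro mult_left_mono) auto
  then show ?thesis using b by (simp add: field_simps)
qed

lemma no_heavy:
  assumes k: "k \<ge> 2" and J: "finite J" "H \<subseteq> J" "card H \<le> k"
  shows "measure_pmf.prob (Pb J k) {f. \<forall>j\<in>H. \<not> f j} \<ge> 1/9"
proof -
  define p where "p = bp k"
  have p: "0 \<le> p" "p \<le> 1/2" "p \<le> 1 / real k" using bp_props[OF k] bp_le[OF k] unfolding p_def by auto
  have "{f. \<forall>j\<in>H. \<not> f j} = Pi J (\<lambda>j. if j \<in> H then {False} else UNIV)"
    using J by (auto simp: Pi_def)
  then have "measure_pmf.prob (Pb J k) {f. \<forall>j\<in>H. \<not> f j} = (\<Prod>j\<in>J. measure_pmf.prob (bernoulli_pmf p) (if j \<in> H then {False} else UNIV))"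
    unfolding Pb_def p_def using J by (simp add: measure_Pi_pmf_Pi)
  also have "\<dots> = (\<Prod>j\<in>J. if j \<in> H then 1 - p else 1)"
    using p by (intro prod.cong) (auto simp: measure_pmf_single)
  also have "\<dots> = (1 - p) ^ card H"
    using J by (simp add: prod.If_cases Int_absorb1)
  also have "(1 - p) ^ card H \<ge> (1 - p) ^ k"
    using p J by (intro power_decreasing) auto
  also have "(1 - p) ^ k \<ge> exp (-2 * p) ^ k"
    using p by (intro power_mono exp_le_1mp) auto
  also have "exp (-2 * p) ^ k = exp (-2 * (p * k))"
    by (simp add: exp_of_nat_mult[symmetric] mult_ac)
  also have "exp (-2 * (p * k)) \<ge> exp (-2)"
    using p k by (simp add: field_simps)
  also have "exp (-2::real) \<ge> 1/9"
  proof -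
    have "exp (2::real) = exp 1 * exp 1" by (simp add: exp_add[symmetric])
    also have "\<dots> \<le> 3 * 3" using exp_le by (intro mult_mono) auto
    finally have "exp (2::real) \<le> 9" by simp
    then show ?thesis by (simp add: exp_minus field_simps)
  qed
  finally show ?thesis by simp
qed

lemma Uf_split:
  assumes "finite J" "H \<subseteq> J" "\<forall>j\<in>H. \<not> f j"
  shows "Uf x J f = Uf x (J - H) f"
proof -
  have "Uf x J f = Uf x (J - H) f + Uf x H f"
    unfolding Uf_def using assms by (subst sum.subset_diff[of H J]) auto
  moreover have "Uf x H f = 0" unfolding Uf_def using assms by auto
  ultimately show ?thesis by simp
qed

lemma window:
  assumes k: "k \<ge> 2" and J: "finite J" "H \<subseteq> J" "card H \<le> k"
    and tail: "(\<Sum>j\<in>J-H. (x j)\<^sup>2) \<le> real k * s2" and s2: "s2 > 0"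
  defines "\<mu> \<equiv> measure_pmf.expectation (Pb J k) (Uf x (J - H))"
  shows "measure_pmf.prob (Pb J k) {f. \<mu> - 3 * sqrt s2 \<le> Uf x J f \<and> Uf x J f < \<mu> - 3 * sqrt s2 + 6 * sqrt s2} \<ge> 1/18"
proof -
  define \<sigma> where "\<sigma> = sqrt s2"
  have \<sigma>: "\<sigma> > 0" "\<sigma>\<^sup>2 = s2" unfolding \<sigma>_def using s2 by auto
  define M where "M = Pb J k"
  define A where "A = {f. \<forall>j\<in>H. \<not> f j}"
  define B where "B = {f. \<bar>Uf x (J - H) f - \<mu>\<bar> < 3 * \<sigma>}"
  have PA: "measure_pmf.prob M A \<ge> 1/9" unfolding M_def A_def by (rule no_heavy[OF k J])
  have p: "0 \<le> bp k" "bp k \<le> 1" "bp k * (1 - bp k) = 1 / (2 * real k)" using bp_props[OF k] by auto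
  have fin: "finite (set_pmf M)" unfolding M_def Pb_def by (rule finite_set_Pi_pmf_bool[OF J(1)])
  have var: "measure_pmf.variance M (Uf x (J - H)) = (\<Sum>j\<in>J-H. (x j)\<^sup>2) * (bp k * (1 - bp k))"
    unfolding M_def Pb_def Uf_def using J p by (intro var_Pi_bool) auto
  have "measure_pmf.variance M (Uf x (J - H)) \<le> real k * s2 * (1 / (2 * real k))"
    unfolding var p(3) using tail k by (intro mult_right_mono) auto
  also have "\<dots> = s2 / 2" using k by (simp add: field_simps)
  finally have varle: "measure_pmf.variance M (Uf x (J - H)) \<le> s2 / 2" .
  have "measure_pmf.prob M {f \<in> space (measure_pmf M). \<bar>Uf x (J - H) f - \<mu>\<bar> \<ge> 3 * \<sigma>}
         \<le> measure_pmf.variance M (Uf x (J - H)) / (3 * \<sigma>)\<^sup>2"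
    unfolding \<mu>_def M_def[symmetric] using \<sigma>
    by (intro measure_pmf.Chebyshev_inequality) (auto intro: integrable_measure_pmf_finite[OF fin])
  also have "\<dots> \<le> (s2 / 2) / (3 * \<sigma>)\<^sup>2" using varle \<sigma> by (intro divide_right_mono) auto
  also have "\<dots> = 1/18" using \<sigma> s2 by (simp add: power_mult_distrib field_simps)
  finally have PnB: "measure_pmf.prob M (UNIV - B) \<le> 1/18" unfolding B_def by (simp add: not_less set_diff_eq)
  have "measure_pmf.prob M A \<le> measure_pmf.prob M ((A \<inter> B) \<union> (UNIV - B))"
    by (intro measure_pmf.finite_measure_mono) auto
  also have "\<dots> \<le> measure_pmf.prob M (A \<inter> B) + measure_pmf.prob M (UNIV - B)"
    by (intro measure_Un_le) auto
  finally have "measure_pmf.prob M (A \<inter> B) \<ge> 1/18" using PA PnB by linarith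
  also have "measure_pmf.prob M (A \<inter> B) \<le> measure_pmf.prob M {f. \<mu> - 3 * sqrt s2 \<le> Uf x J f \<and> Uf x J f < \<mu> - 3 * sqrt s2 + 6 * sqrt s2}"
  proof (intro measure_pmf.finite_measure_mono subsetI)
    fix f assume f: "f \<in> A \<inter> B"
    then have "Uf x J f = Uf x (J - H) f" using Uf_split[OF J(1,2)] unfolding A_def by auto
    then show "f \<in> {f. \<mu> - 3 * sqrt s2 \<le> Uf x J f \<and> Uf x J f < \<mu> - 3 * sqrt s2 + 6 * sqrt s2}"
      using f unfolding B_def \<sigma>_def by auto
  qed auto
  finally show ?thesis unfolding M_def .
qed

lemma smallball_pos:
  assumes k: "k \<ge> 2" and J: "finite J" "H \<subseteq> J" "card H \<le> k"
    and tail: "(\<Sum>j\<in>J-H. (x j)\<^sup>2) \<le> real k * s2" and s2: "s2 > 0"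
    and a: "0 < a" "a \<le> sqrt s2"
  shows "measure_pmf.prob (pair_pmf (Pb J k) (Pb J k)) {z. \<bar>Uf x J (fst z) - Uf x J (snd z)\<bar> \<le> a}
       \<ge> a / (2268 * sqrt s2)"
proof -
  define \<sigma> where "\<sigma> = sqrt s2"
  have \<sigma>: "\<sigma> > 0" unfolding \<sigma>_def using s2 by auto
  define \<mu> where "\<mu> = measure_pmf.expectation (Pb J k) (Uf x (J - H))"
  define L0 where "L0 = \<mu> - 3 * \<sigma>"
  define N where "N = nat \<lceil>6 * \<sigma> / a\<rceil>"
  have r: "6 * \<sigma> / a \<ge> 6" using a \<sigma> unfolding \<sigma>_def by (simp add: field_simps)
  have N1: "N \<ge> 1" unfolding N_def using r by linarith
  have Nge: "real N \<ge> 6 * \<sigma> / a" unfolding N_def using r by linarith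
  have Nle: "real N \<le> 6 * \<sigma> / a + 1" unfolding N_def using r by linarith
  have Nle2: "real N \<le> 7 * \<sigma> / a" using Nle a \<sigma> unfolding \<sigma>_def by (simp add: field_simps)
  have Na: "real N * a \<ge> 6 * \<sigma>" using Nge a by (simp add: field_simps)
  have W: "measure_pmf.prob (Pb J k) {f. L0 \<le> Uf x J f \<and> Uf x J f < L0 + 6 * \<sigma>} \<ge> 1/18"
    using window[OF k J tail s2] unfolding L0_def \<mu>_def \<sigma>_def by simp
  have "measure_pmf.prob (Pb J k) {f. L0 \<le> Uf x J f \<and> Uf x J f < L0 + 6 * \<sigma>}
      \<le> measure_pmf.prob (Pb J k) {f. L0 \<le> Uf x J f \<and> Uf x J f < L0 + real N * a}"
    using Na by (intro measure_pmf.finite_measure_mono) auto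
  then have W2: "measure_pmf.prob (Pb J k) {f. L0 \<le> Uf x J f \<and> Uf x J f < L0 + real N * a} \<ge> 1/18"
    using W by linarith
  have "a / (2268 * \<sigma>) = (1/18)\<^sup>2 / (7 * \<sigma> / a)" using a \<sigma> by (simp add: field_simps)
  also have "\<dots> \<le> (1/18)\<^sup>2 / real N" using N1 Nle2 \<sigma> a by (intro divide_left_mono) auto
  also have "\<dots> \<le> (measure_pmf.prob (Pb J k) {f. L0 \<le> Uf x J f \<and> Uf x J f < L0 + real N * a})\<^sup>2 / real N"
    using W2 by (intro divide_right_mono power_mono) auto
  also have "\<dots> \<le> measure_pmf.prob (pair_pmf (Pb J k) (Pb J k)) {z. \<bar>Uf x J (fst z) - Uf x J (snd z)\<bar> \<le> a}"
    by (rule pigeonhole_smallball[OF a(1) N1])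
  finally show ?thesis unfolding \<sigma>_def .
qed

lemma smallball_zero:
  assumes k: "k \<ge> 2" and J: "finite J" "H \<subseteq> J" "card H \<le> k"
    and tail: "(\<Sum>j\<in>J-H. (x j)\<^sup>2) \<le> 0" and a: "0 \<le> a"
  shows "measure_pmf.prob (pair_pmf (Pb J k) (Pb J k)) {z. \<bar>Uf x J (fst z) - Uf x J (snd z)\<bar> \<le> a} \<ge> 1/81"
proof -
  define A where "A = {f. \<forall>j\<in>H. \<not> f j}"
  have x0: "x j = 0" if "j \<in> J - H" for j
  proof -
    have "(\<Sum>j\<in>J-H. (x j)\<^sup>2) = 0" using tail sum_nonneg[of "J-H" "\<lambda>j. (x j)\<^sup>2"] by auto
    then show ?thesis using that J by (subst (asm) sum_nonneg_eq_0_iff) auto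
  qed
  have U0: "Uf x J f = 0" if "f \<in> A" for f
  proof -
    have "Uf x J f = Uf x (J - H) f" using Uf_split[OF J(1,2)] that unfolding A_def by auto
    also have "\<dots> = 0" unfolding Uf_def using x0 by auto
    finally show ?thesis .
  qed
  have "1/81 = (1/9::real)\<^sup>2" by (simp add: power2_eq_square)
  also have "\<dots> \<le> (measure_pmf.prob (Pb J k) A)\<^sup>2"
    unfolding A_def using no_heavy[OF k J] by (intro power_mono) auto
  also have "\<dots> = measure_pmf.prob (pair_pmf (Pb J k) (Pb J k)) (A \<times> A)" by (simp add: pmf_prob_square)
  also have "\<dots> \<le> measure_pmf.prob (pair_pmf (Pb J k) (Pb J k)) {z. \<bar>Uf x J (fst z) - Uf x J (snd z)\<bar> \<le> a}"
    using U0 a by (intro measure_pmf.finite_measure_mono) auto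
  finally show ?thesis .
qed

lemma heavy_set_exists:
  "\<exists>H. H \<subseteq> {0..<n} \<and> card H \<le> k \<and> (\<Sum>j\<in>{0..<n}-H. (x j)\<^sup>2) = tail_sq n x k"
proof -
  define f where "f = (\<lambda>j. (x j)\<^sup>2)"
  define idx where "idx = sort_key (\<lambda>j. - f j) [0..<n]"
  have ms: "mset idx = mset [0..<n]" unfolding idx_def by simp
  have dist: "distinct idx" using ms by (metis distinct_upt mset_eq_imp_distinct_iff)
  have setidx: "set idx = {0..<n}" using ms by (metis atLeastLessThan_upt mset_eq_setD)
  have "sorted (map (\<lambda>j. - f j) idx)" unfolding idx_def by (rule sorted_sort_key)
  then have "sorted (rev (map f idx))"
    by (simp add: sorted_map sorted_wrt_rev rev_map[symmetric] sorted_wrt_map)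
  moreover have "mset (rev (map f idx)) = mset (map f [0..<n])" using ms by simp
  ultimately have "sort (map f [0..<n]) = rev (map f idx)" by (intro properties_for_sort) auto
  then have "rev (sort (map f [0..<n])) = map f idx" by simp
  then have "tail_sq n x k = sum_list (map f (drop k idx))"
    unfolding tail_sq_def f_def[symmetric] by (simp add: drop_map)
  also have "\<dots> = (\<Sum>j\<in>set (drop k idx). f j)"
    using dist by (simp add: sum_list_distinct_conv_sum_set)
  also have "set (drop k idx) = {0..<n} - set (take k idx)"
  proof -
    have "set idx = set (take k idx) \<union> set (drop k idx)" by (metis append_take_drop_id set_append)
    moreover have "set (take k idx) \<inter> set (drop k idx) = {}"
      using dist by (intro set_take_disj_set_drop_if_distinct) auto
    ultimately show ?thesis using setidx by auto
  qed
  finally have eq: "(\<Sum>j\<in>{0..<n} - set (take k idx). (x j)\<^sup>2) = tail_sq n x k" unfolding f_def ..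
  have "card (set (take k idx)) \<le> k" by (metis card_length le_trans length_take min.cobounded2)
  moreover have "set (take k idx) \<subseteq> {0..<n}" using setidx by (metis set_take_subset)
  ultimately show ?thesis using eq by blast
qed

lemma row_prob:
  fixes x :: "nat \<Rightarrow> real"
  assumes k: "k \<ge> 2" and i: "i < n" and tau: "0 < \<tau>" "\<tau> \<le> 1"
  defines "s2 \<equiv> tail_sq n x k / real k"
  defines "a \<equiv> sqrt (\<tau> * s2)"
  shows "measure_pmf.prob (rowP n k) {r. Zr n x i r > a} \<le> 1/2 - sqrt \<tau> / 4536"
    and "measure_pmf.prob (rowP n k) {r. Zr n x i r < -a} \<le> 1/2 - sqrt \<tau> / 4536"
proof -
  define J where "J = {0..<n} - {i}"
  define P where "P = Pb J k"
  define D where "D = (\<lambda>z. Uf x J (fst z) - Uf x J (snd z))"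
  have finJ: "finite J" unfolding J_def by simp
  have law: "map_pmf (Zr n x i) (rowP n k) = map_pmf D (pair_pmf P P)"
  proof -
    have e: "(\<lambda>(f, g). Uf x J f - Uf x J g) = D" unfolding D_def by (auto simp: fun_eq_iff)
    show ?thesis using row_law[OF k i, of x] unfolding e[symmetric] P_def J_def .
  qed
  have pr: "measure_pmf.prob (rowP n k) {r. Q (Zr n x i r)} = measure_pmf.prob (pair_pmf P P) {z. Q (D z)}" for Q
  proof -
    have "measure_pmf.prob (rowP n k) {r. Q (Zr n x i r)} = measure_pmf.prob (map_pmf (Zr n x i) (rowP n k)) {v. Q v}"
      by simp
    also have "\<dots> = measure_pmf.prob (map_pmf D (pair_pmf P P)) {v. Q v}" by (simp only: law)
    also have "\<dots> = measure_pmf.prob (pair_pmf P P) {z. Q (D z)}" by simp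
    finally show ?thesis .
  qed
  obtain H where H: "H \<subseteq> {0..<n}" "card H \<le> k" "(\<Sum>j\<in>{0..<n}-H. (x j)\<^sup>2) = tail_sq n x k"
    using heavy_set_exists by blast
  define H' where "H' = H \<inter> J"
  have H': "H' \<subseteq> J" "card H' \<le> k" unfolding H'_def using H card_mono[of H "H \<inter> J"] finite_subset[OF H(1)] by fastforce+
  have tnn: "tail_sq n x k \<ge> 0" using H(3)[symmetric] by (auto intro: sum_nonneg)
  have s2nn: "s2 \<ge> 0" unfolding s2_def using tnn by simp
  have tailJ: "(\<Sum>j\<in>J-H'. (x j)\<^sup>2) \<le> real k * s2"
  proof -
    have "(\<Sum>j\<in>J-H'. (x j)\<^sup>2) \<le> (\<Sum>j\<in>{0..<n}-H. (x j)\<^sup>2)"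
      unfolding H'_def J_def by (intro sum_mono2) auto
    also have "\<dots> = real k * s2" using H(3) k unfolding s2_def by simp
    finally show ?thesis .
  qed
  have a0: "a \<ge> 0" unfolding a_def using tau s2nn by simp
  define q where "q = measure_pmf.prob (pair_pmf P P) {z. \<bar>D z\<bar> \<le> a}"
  have q: "q \<ge> sqrt \<tau> / 2268"
  proof (cases "s2 = 0")
    case True
    have "q \<ge> 1/81" unfolding q_def P_def D_def
      using smallball_zero[OF k finJ H', of x a] tailJ True a0 by simp
    moreover have "sqrt \<tau> \<le> 1" using tau by simp
    ultimately show ?thesis by linarith
  next
    case False
    then have s2p: "s2 > 0" using s2nn by simp
    have ap: "0 < a" "a \<le> sqrt s2" unfolding a_def using tau s2p
      by (auto intro!: real_sqrt_le_mono mult_left_le_one_le)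
    have "q \<ge> a / (2268 * sqrt s2)" unfolding q_def P_def D_def
      using smallball_pos[OF k finJ H' tailJ s2p ap] by simp
    moreover have "a / (2268 * sqrt s2) = sqrt \<tau> / 2268"
      unfolding a_def using s2p by (simp add: real_sqrt_mult field_simps)
    ultimately show ?thesis by simp
  qed
  define pp where "pp = measure_pmf.prob (pair_pmf P P) {z. D z > a}"
  define pm where "pm = measure_pmf.prob (pair_pmf P P) {z. D z < -a}"
  have sym: "pp = pm"
  proof -
    have "pp = measure_pmf.prob (map_pmf (\<lambda>(x, y). (y, x)) (pair_pmf P P)) {z. D z > a}"
      unfolding pp_def by (subst pair_commute_pmf) (rule refl)
    also have "\<dots> = pm" unfolding pm_def D_def by (simp add: case_prod_beta) (intro arg_cong[where f = "measure_pmf.prob _"], auto)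
    finally show ?thesis .
  qed
  have "pp + pm = measure_pmf.prob (pair_pmf P P) ({z. D z > a} \<union> {z. D z < -a})"
    unfolding pp_def pm_def using a0 by (intro measure_pmf.finite_measure_Union[symmetric]) auto
  also have "\<dots> = 1 - q"
  proof -
    have "{z. D z > a} \<union> {z. D z < -a} = UNIV - {z. \<bar>D z\<bar> \<le> a}" by auto
    then show ?thesis unfolding q_def using measure_pmf.prob_compl[of "{z. \<bar>D z\<bar> \<le> a}" "pair_pmf P P"] by simp
  qed
  finally have "pp = (1 - q) / 2" "pm = (1 - q) / 2" using sym by auto
  then have "pp \<le> 1/2 - sqrt \<tau> / 4536" "pm \<le> 1/2 - sqrt \<tau> / 4536" using q by auto
  then show "measure_pmf.prob (rowP n k) {r. Zr n x i r > a} \<le> 1/2 - sqrt \<tau> / 4536"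
    and "measure_pmf.prob (rowP n k) {r. Zr n x i r < -a} \<le> 1/2 - sqrt \<tau> / 4536"
    unfolding pp_def pm_def using pr[of "\<lambda>v. a < v"] pr[of "\<lambda>v. v < -a"] by auto
qed

lemma length_filter_map_upt:
  "length (filter P (map g [0..<R])) = card {u\<in>{0..<R}. P (g u)}"
  by (simp add: length_filter_conv_card) (intro arg_cong[where f = card], auto)

theorem theorem1p1:
  shows "\<exists>c::real > 0. \<forall>n::nat. \<forall>x::nat \<Rightarrow> real. \<forall>R::nat. \<forall>k::nat. \<forall>t::real. \<forall>i::nat.
    n \<ge> 1 \<longrightarrow> R \<ge> 1 \<longrightarrow> k \<ge> 2 \<longrightarrow> t \<le> real R \<longrightarrow> i < n \<longrightarrow>
    measure_pmf.prob (cs_hashes n R k)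
      {(h, s). (cs_est n R h s x i - x i)\<^sup>2 > t / real R * (tail_sq n x k / real k)}
    < 2 * exp (- c * t)"
proof (intro exI[of _ "(1/4536)\<^sup>2"] conjI allI impI)
  show "(0::real) < (1/4536)\<^sup>2" by simp
  define c :: real where "c = (1/4536)\<^sup>2"
  fix n :: nat and x :: "nat \<Rightarrow> real" and R k :: nat and t :: real and i :: nat
  assume n: "n \<ge> 1" and R: "R \<ge> 1" and k: "k \<ge> 2" and tR: "t \<le> real R" and i: "i < n"
  define E where "E = {(h, s). (cs_est n R h s x i - x i)\<^sup>2 > t / real R * (tail_sq n x k / real k)}"
  show "measure_pmf.prob (cs_hashes n R k) E < 2 * exp (- ((1/4536)\<^sup>2) * t)"
  proof -
  have main: "measure_pmf.prob (cs_hashes n R k) E < 2 * exp (- c * t)"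
  proof (cases "t > 0")
    case False
    have "measure_pmf.prob (cs_hashes n R k) E \<le> 1" by simp
    also have "1 < 2 * exp (- c * t)"
    proof -
      have "- c * t \<ge> 0" using False unfolding c_def by (simp add: mult_nonneg_nonpos)
      then have "exp (- c * t) \<ge> 1" by simp
      then show ?thesis by linarith
    qed
    finally show ?thesis .
  next
    case True
    define \<tau> where "\<tau> = t / real R"
    have tau: "0 < \<tau>" "\<tau> \<le> 1" unfolding \<tau>_def using True tR R by auto
    define s2 where "s2 = tail_sq n x k / real k"
    define a where "a = sqrt (\<tau> * s2)"
    have tnn: "tail_sq n x k \<ge> 0"
    proof -
      obtain H where "(\<Sum>j\<in>{0..<n}-H. (x j)\<^sup>2) = tail_sq n x k" using heavy_set_exists by blast
      then show ?thesis by (metis sum_nonneg zero_le_power2)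
    qed
    have a0: "a \<ge> 0" and a2: "a\<^sup>2 = \<tau> * s2" unfolding a_def s2_def using tau tnn by auto
    define Bp where "Bp = {r. Zr n x i r > a}"
    define Bm where "Bm = {r. Zr n x i r < -a}"
    have k1: "k \<ge> 1" using k by simp
    define \<epsilon> where "\<epsilon> = sqrt \<tau> / 4536"
    have eps: "\<epsilon> \<ge> 0" unfolding \<epsilon>_def using tau by simp
    have Pp: "measure_pmf.prob (rowP n k) Bp \<le> 1/2 - \<epsilon>"
      unfolding Bp_def \<epsilon>_def a_def s2_def by (rule row_prob(1)[OF k i tau])
    have Pm: "measure_pmf.prob (rowP n k) Bm \<le> 1/2 - \<epsilon>"
      unfolding Bm_def \<epsilon>_def a_def s2_def by (rule row_prob(2)[OF k i tau])
    define E1 where "E1 = {\<omega>. real R \<le> 2 * real (card {u\<in>{0..<R}. \<omega> u \<in> Bp})}"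
    define E2 where "E2 = {\<omega>. real R \<le> 2 * real (card {u\<in>{0..<R}. \<omega> u \<in> Bm})}"
    have sub: "Phi n R -` E \<inter> set_pmf (bigP n R k) \<subseteq> E1 \<union> E2"
    proof
      fix \<omega> assume \<omega>: "\<omega> \<in> Phi n R -` E \<inter> set_pmf (bigP n R k)"
      define L where "L = map (\<lambda>u. Zr n x i (\<omega> u) + x i) [0..<R]"
      have est: "cs_est n R (fst (Phi n R \<omega>)) (snd (Phi n R \<omega>)) x i = median_list L"
        unfolding L_def using est_identity[OF k1 i, of \<omega> R x] \<omega> by auto
      have "(median_list L - x i)\<^sup>2 > a\<^sup>2"
        using \<omega> est unfolding E_def a2 \<tau>_def s2_def by (auto simp: case_prod_beta)
      then have "\<bar>median_list L - x i\<bar> > a" using a0 by (metis abs_ge_zero power2_abs power_mono not_less)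
      then have "median_list L > x i + a \<or> median_list L < x i - a" by linarith
      then show "\<omega> \<in> E1 \<union> E2"
      proof
        assume "median_list L > x i + a"
        from median_gt[OF this] have "length L \<le> 2 * length (filter (\<lambda>v. v > x i + a) L)" .
        also have "length (filter (\<lambda>v. v > x i + a) L) = card {u\<in>{0..<R}. \<omega> u \<in> Bp}"
          unfolding L_def length_filter_map_upt Bp_def by (intro arg_cong[where f = card]) auto
        finally have "R \<le> 2 * card {u\<in>{0..<R}. \<omega> u \<in> Bp}" unfolding L_def by simp
        then show ?thesis unfolding E1_def by (simp add: of_nat_mult[symmetric] del: of_nat_mult)
      next
        assume "median_list L < x i - a"
        from median_lt[OF this] have "length L \<le> 2 * length (filter (\<lambda>v. v < x i - a) L)" .
        also have "length (filter (\<lambda>v. v < x i - a) L) = card {u\<in>{0..<R}. \<omega> u \<in> Bm}"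
          unfolding L_def length_filter_map_upt Bm_def by (intro arg_cong[where f = card]) auto
        finally have "R \<le> 2 * card {u\<in>{0..<R}. \<omega> u \<in> Bm}" unfolding L_def by simp
        then show ?thesis unfolding E2_def by (simp add: of_nat_mult[symmetric] del: of_nat_mult)
      qed
    qed
    have "measure_pmf.prob (cs_hashes n R k) E = measure_pmf.prob (bigP n R k) (Phi n R -` E)"
      by (simp add: cs_hashes_decomp[OF k1])
    also have "\<dots> = measure_pmf.prob (bigP n R k) (Phi n R -` E \<inter> set_pmf (bigP n R k))"
      by (rule measure_Int_set_pmf[symmetric])
    also have "\<dots> \<le> measure_pmf.prob (bigP n R k) (E1 \<union> E2)"
      using sub by (intro measure_pmf.finite_measure_mono) auto
    also have "\<dots> \<le> measure_pmf.prob (bigP n R k) E1 + measure_pmf.prob (bigP n R k) E2"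
      by (intro measure_Un_le) auto
    also have "measure_pmf.prob (bigP n R k) E1 \<le> exp (- 2 * real R * \<epsilon>\<^sup>2)"
      unfolding E1_def bigP_def by (rule binom_tail[OF R eps Pp])
    also have "measure_pmf.prob (bigP n R k) E2 \<le> exp (- 2 * real R * \<epsilon>\<^sup>2)"
      unfolding E2_def bigP_def by (rule binom_tail[OF R eps Pm])
    also have "- 2 * real R * \<epsilon>\<^sup>2 = - 2 * c * t"
    proof -
      have "\<epsilon>\<^sup>2 = \<tau> / 4536\<^sup>2" unfolding \<epsilon>_def using tau by (simp add: power_divide)
      then show ?thesis unfolding c_def \<tau>_def using R by (simp add: field_simps power_divide)
    qed
    also have "exp (- 2 * c * t) + exp (- 2 * c * t) < 2 * exp (- c * t)"
    proof -
      have "- 2 * c * t < - c * t" using True unfolding c_def by simp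
      then show ?thesis by simp
    qed
    finally show ?thesis by simp
  qed
  then show ?thesis unfolding c_def by simp
  qed
qed

end
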